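(* For every sufficiently small $\eta>0$ there exists $\nu_0>0$ such that for every $\nu\in(0,\nu_0]$ there exists $\beta_0>0$ such that for every $\beta\in(0,\beta_0]$ there exists $\alpha_0>0$ such that for every $\alpha\in(0,\alpha_0]$ there exists $n_0$ such that for all $n\ge n_0$ the following holds. Let $\hat G$ be an $(\alpha,\eta,\nu)$-superextremal biclique on $n$ vertices with partition $V(\hat G)=A\uplus B$, let $M$ be a matching in $\hat G[B]$ with $|E(M)|\le\alpha n$, and set $Z=E(M)$. Suppose that $\hat G[A]$ has no edges, the edge set of $\hat G[B]$ is exactly $E(M)$, and for every edge $ab\in E(\hat G)$ with $a\in A,b\in B$ we have $\max\{d_{\hat G}(a,B),d_{\hat G}(b,A)\}\ge(1/2-\eta)n$. Then for every directed Hamilton cycle $\vec H$ of $\hat G$ and every edge $e\in E(H)\setminus Z$, there are at least $\beta n^2$ pairs $(e',i)$ with $e'\in E(\hat G)\setminus E(H)$ and $i\in\{1,2\}$ such that the switching $s_i(\vec H;e,e')$ is admissible (with respect to $\hat G$).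
   Context: $d_G(v,X)$ is the number of neighbours of $v$ in $X$. A graph $G$ on $n$ vertices is an $(\alpha,\varepsilon,\nu)$-superextremal biclique if there is a partition $V(G)=A\uplus B$ with: (B1) $0\le |B|-|A|\le\alpha n$; (B2) $d(a,B)\ge(1/2-\varepsilon)n$ for all but at most $\alpha n$ vertices $a\in A$; (B3) $d(a,B)\ge\nu n$ for all $a\in A$; (B4) $d(b,A)\ge(1/2-\varepsilon)n$ for all but at most $\alpha n$ vertices $b\in B$; (B5) $d(b,A)\ge(1/4-\varepsilon)n$ for all $b\in B$; (B6) if $|A|\ne\lfloor n/2\rfloor$, then $d(b,B)\le 2\nu n$ for all $b\in B$. A directed Hamilton cycle $\vec H$ is a Hamilton cycle $H$ with a cyclic orientation; its successor function $\pi$ sends $x$ to the head of the arc leaving $x$. For $e=x\pi(x)\in E(H)$ and $e'=x'y'\notin E(H)$ with endpoints labelled so that $x$ lies on the directed path of $\vec H$ from $y'$ to $x'$, let $H_1=(H-\{e,x'\pi(x'),\pi^{-1}(y')y'\})+\{e',x\pi(x'),\pi^{-1}(y')\pi(x)\}$ and $H_2=(H-\{e,x'\pi(x'),\pi^{-1}(y')y'\})+\{e',x\pi^{-1}(y'),\pi(x)\pi(x')\}$; $s_i(\vec H;e,e')$ is $H_i$ oriented to contain the arc $(x',y')$. It is admissible (with respect to a graph $G$) if $H_i\subseteq G$. *)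

theory Defs
  imports Complex_Main
begin

definition simple_graph :: "'a set \<Rightarrow> 'a set set \<Rightarrow> bool" where
  "simple_graph V E \<longleftrightarrow> finite V \<and>
     (\<forall>e\<in>E. \<exists>u v. e = {u, v} \<and> u \<noteq> v \<and> u \<in> V \<and> v \<in> V)"

definition deg_in :: "'a set set \<Rightarrow> 'a \<Rightarrow> 'a set \<Rightarrow> nat" where
  "deg_in E v X = card {u \<in> X. {v, u} \<in> E}"

definition superextremal_biclique ::
  "real \<Rightarrow> real \<Rightarrow> real \<Rightarrow> 'a set \<Rightarrow> 'a set set \<Rightarrow> 'a set \<Rightarrow> 'a set \<Rightarrow> bool" where
  "superextremal_biclique \<alpha> \<epsilon> \<nu> V E A B \<longleftrightarrow>
     (let n = real (card V) in
       simple_graph V E \<and> A \<inter> B = {} \<and> A \<union> B = V \<and>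
       0 \<le> real (card B) - real (card A) \<and> real (card B) - real (card A) \<le> \<alpha> * n \<and>
       real (card {a \<in> A. real (deg_in E a B) < (1/2 - \<epsilon>) * n}) \<le> \<alpha> * n \<and>
       (\<forall>a\<in>A. real (deg_in E a B) \<ge> \<nu> * n) \<and>
       real (card {b \<in> B. real (deg_in E b A) < (1/2 - \<epsilon>) * n}) \<le> \<alpha> * n \<and>
       (\<forall>b\<in>B. real (deg_in E b A) \<ge> (1/4 - \<epsilon>) * n) \<and>
       (card A \<noteq> card V div 2 \<longrightarrow> (\<forall>b\<in>B. real (deg_in E b B) \<le> 2 * \<nu> * n)))"

definition matching_in :: "'a set set \<Rightarrow> 'a set \<Rightarrow> 'a set set \<Rightarrow> bool" where
  "matching_in E B M \<longleftrightarrow> M \<subseteq> E \<and> (\<forall>e\<in>M. e \<subseteq> B) \<and>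
     (\<forall>e\<in>M. \<forall>f\<in>M. e \<noteq> f \<longrightarrow> e \<inter> f = {})"

text \<open>A directed Hamilton cycle of (V,E), given by its successor function \<pi>
  (a cyclic permutation of V with a single orbit; only its values on V matter).\<close>
definition dir_ham_cycle :: "'a set \<Rightarrow> 'a set set \<Rightarrow> ('a \<Rightarrow> 'a) \<Rightarrow> bool" where
  "dir_ham_cycle V E \<pi> \<longleftrightarrow> card V \<ge> 3 \<and> bij_betw \<pi> V V \<and>
     (\<forall>x\<in>V. \<forall>y\<in>V. \<exists>k. (\<pi> ^^ k) x = y) \<and> (\<forall>x\<in>V. {x, \<pi> x} \<in> E)"

definition ham_edges :: "'a set \<Rightarrow> ('a \<Rightarrow> 'a) \<Rightarrow> 'a set set" where
  "ham_edges V \<pi> = {{x, \<pi> x} | x. x \<in> V}"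

definition on_dir_path :: "('a \<Rightarrow> 'a) \<Rightarrow> 'a \<Rightarrow> 'a \<Rightarrow> 'a \<Rightarrow> bool" where
  "on_dir_path \<pi> u v w \<longleftrightarrow>
     (\<exists>k l. k \<le> l \<and> (\<pi> ^^ k) u = w \<and> (\<pi> ^^ l) u = v \<and> (\<forall>j<l. (\<pi> ^^ j) u \<noteq> v))"

definition switch_edges ::
  "nat \<Rightarrow> 'a set \<Rightarrow> ('a \<Rightarrow> 'a) \<Rightarrow> 'a \<Rightarrow> 'a \<Rightarrow> 'a \<Rightarrow> 'a set set" where
  "switch_edges i V \<pi> x x' y' =
     (let pinv = inv_into V \<pi>;
          H0 = ham_edges V \<pi> - {{x, \<pi> x}, {x', \<pi> x'}, {pinv y', y'}} in
      if i = 1 then H0 \<union> {{x', y'}, {x, \<pi> x'}, {pinv y', \<pi> x}}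
      else H0 \<union> {{x', y'}, {x, pinv y'}, {\<pi> x, \<pi> x'}})"

definition admissible_switch ::
  "'a set \<Rightarrow> 'a set set \<Rightarrow> ('a \<Rightarrow> 'a) \<Rightarrow> 'a \<Rightarrow> 'a set \<Rightarrow> nat \<Rightarrow> bool" where
  "admissible_switch V E \<pi> x e' i \<longleftrightarrow>
     (\<exists>x' y'. e' = {x', y'} \<and> on_dir_path \<pi> y' x' x \<and> switch_edges i V \<pi> x x' y' \<subseteq> E)"

end

theory Submission
  imports Defs
begin


lemma funpow_period:
  assumes "(f ^^ d) x = x"
  shows "(f ^^ (m*d + r)) x = (f ^^ r) x"
proof -
  have "(f ^^ (m*d)) x = x"
  proof (induction m)
    case 0 then show ?case by simp
  next
    case (Suc m)
    have "(f ^^ (Suc m * d)) x = (f ^^ d) ((f ^^ (m*d)) x)"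
      by (simp add: funpow_add)
    then show ?case using Suc assms by simp
  qed
  then show ?thesis by (simp add: funpow_add add.commute[of "m*d"])
qed

lemma funpow_mod:
  assumes "(f ^^ d) x = x"
  shows "(f ^^ k) x = (f ^^ (k mod d)) x"
  using funpow_period[OF assms, of "k div d" "k mod d"] by simp

lemma cyc_basic:
  assumes H: "dir_ham_cycle V E \<pi>" and xV: "x \<in> V" and n: "card V = n"
  shows "inj_on (\<lambda>k. (\<pi>^^k) x) {..<n}" "(\<lambda>k. (\<pi>^^k) x) ` {..<n} = V"
    "(\<pi>^^n) x = x" "\<And>k. (\<pi>^^k) x \<in> V" "\<And>k. {(\<pi>^^k) x, (\<pi>^^Suc k) x} \<in> E"
    "finite V" "n \<ge> 3" "inj_on \<pi> V"
proof -
  define c where "c = (\<lambda>k. (\<pi>^^k) x)"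
  have bij: "bij_betw \<pi> V V" and reach: "\<forall>x\<in>V. \<forall>y\<in>V. \<exists>k. (\<pi> ^^ k) x = y"
    and ed: "\<forall>x\<in>V. {x, \<pi> x} \<in> E" and n3: "card V \<ge> 3"
    using H unfolding dir_ham_cycle_def by auto
  show fin: "finite V" using n3 card.infinite by fastforce
  show "n \<ge> 3" using n3 n by simp
  show injp: "inj_on \<pi> V" using bij bij_betw_def by blast
  have bijk: "bij_betw (\<pi>^^k) V V" for k using bij_betw_funpow[OF bij] .
  show cV: "\<And>k. (\<pi>^^k) x \<in> V" using bijk xV bij_betw_apply by metis
  show "\<And>k. {(\<pi>^^k) x, (\<pi>^^Suc k) x} \<in> E" using ed cV by simp
  have key: "False" if "0 < d" "d < n" "c d = x" for d
  proof -
    have "V \<subseteq> c ` {..<d}"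
    proof
      fix y assume "y \<in> V"
      then obtain k where "c k = y" using reach xV unfolding c_def by blast
      moreover have "c k = c (k mod d)" using funpow_mod[where f=\<pi> and d=d and x=x and k=k] that unfolding c_def by simp
      ultimately show "y \<in> c ` {..<d}" using that by auto
    qed
    then have "card V \<le> card (c ` {..<d})" by (simp add: card_mono)
    also have "\<dots> \<le> d" using card_image_le[of "{..<d}" c] by simp
    finally show False using that n by simp
  qed
  have shift: "c (i + d) = (\<pi>^^i) (c d)" for i d unfolding c_def by (simp add: funpow_add)
  have injc: "inj_on c {..<n}"
  proof (rule linorder_inj_onI')
    fix i j assume ij: "i \<in> {..<n}" "j \<in> {..<n}" "i < j"
    show "c i \<noteq> c j"
    proof
      assume eq: "c i = c j"
      have "(\<pi>^^i) (c 0) = (\<pi>^^i) (c (j-i))" using eq shift[of i 0] shift[of i "j-i"] ij by simp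
      then have "c 0 = c (j - i)" using bijk[of i] unfolding bij_betw_def inj_on_def
        using cV unfolding c_def by blast
      moreover have "j - i < n" using ij by auto
      ultimately show False using key[of "j-i"] ij unfolding c_def by simp
    qed
  qed
  then show "inj_on (\<lambda>k. (\<pi>^^k) x) {..<n}" unfolding c_def .
  have img: "c ` {..<n} = V"
  proof (rule card_subset_eq[OF fin])
    show "c ` {..<n} \<subseteq> V" using cV unfolding c_def by auto
    show "card (c ` {..<n}) = card V" using card_image[OF injc] n by simp
  qed
  then show "(\<lambda>k. (\<pi>^^k) x) ` {..<n} = V" unfolding c_def .
  have "c n \<in> V" using cV unfolding c_def .
  then obtain i where i: "i < n" "c n = c i" using img by auto
  show "(\<pi>^^n) x = x"
  proof (cases "i = 0")
    case True then show ?thesis using i unfolding c_def by simp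
  next
    case False
    have "(\<pi>^^i) (c (n-i)) = (\<pi>^^i) (c 0)" using i shift[of i "n-i"] shift[of i 0] by simp
    then have "c (n-i) = c 0" using bijk[of i] unfolding bij_betw_def inj_on_def
        using cV unfolding c_def by blast
    then show ?thesis using key[of "n-i"] False i unfolding c_def by simp
  qed
qed




lemma card_pred_le:
  fixes c :: "nat \<Rightarrow> 'a"
  assumes "inj_on c {..<n}" "finite X"
  shows "card {q. 1\<le>q \<and> q<n \<and> c (q-1) \<in> X} \<le> card X"
proof (rule card_inj_on_le[where f="\<lambda>q. c (q-1)"])
  show "inj_on (\<lambda>q. c (q - 1)) {q. 1 \<le> q \<and> q < n \<and> c (q - 1) \<in> X}"
  proof (rule inj_onI)
    fix a b assume "a \<in> {q. 1 \<le> q \<and> q < n \<and> c (q - 1) \<in> X}" "b \<in> {q. 1 \<le> q \<and> q < n \<and> c (q - 1) \<in> X}" "c (a-1) = c (b-1)"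
    then have "a - 1 = b - 1" by (intro inj_onD[OF assms(1)]) auto
    then show "a = b" using \<open>a \<in> _\<close> \<open>b \<in> _\<close> by auto
  qed
qed (use assms in auto)

lemma card_succ_le:
  fixes c :: "nat \<Rightarrow> 'a"
  assumes "inj_on c {..<n}" "finite X"
  shows "card {q. q+1<n \<and> c (q+1) \<in> X} \<le> card X"
proof (rule card_inj_on_le[where f="\<lambda>q. c (q+1)"])
  show "inj_on (\<lambda>q. c (q + 1)) {q. q+1<n \<and> c (q+1) \<in> X}"
  proof (rule inj_onI)
    fix a b assume "a \<in> {q. q+1<n \<and> c (q+1) \<in> X}" "b \<in> {q. q+1<n \<and> c (q+1) \<in> X}" "c (a+1) = c (b+1)"
    then have "a + 1 = b + 1" by (intro inj_onD[OF assms(1)]) auto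
    then show "a = b" by auto
  qed
qed (use assms in auto)

lemma card_ends: "card {p::nat. p < n \<and> \<not> (2 \<le> p \<and> p + 3 \<le> n)} \<le> 4"
proof -
  have sub: "{p::nat. p < n \<and> \<not> (2 \<le> p \<and> p + 3 \<le> n)} \<subseteq> set [0,1,n-2,n-1]"
  proof
    fix p assume "p \<in> {p::nat. p < n \<and> \<not> (2 \<le> p \<and> p + 3 \<le> n)}"
    then have "p = 0 \<or> p = 1 \<or> p = n-2 \<or> p = n-1" by simp arith
    then show "p \<in> set [0,1,n-2,n-1]" by (simp only: set_simps insert_iff) blast
  qed
  have "card {p::nat. p < n \<and> \<not> (2 \<le> p \<and> p + 3 \<le> n)} \<le> card (set [0,1,n-2,n-1::nat])"
    by (rule card_mono[OF finite_set sub])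
  also have "\<dots> \<le> length [0,1,n-2,n-1::nat]" by (rule card_length)
  finally show ?thesis by simp
qed




lemma core_count:
  fixes c :: "nat \<Rightarrow> 'a" and n :: nat and \<alpha> \<eta> \<nu> :: real
  assumes inj: "inj_on c {..<n}" and cV: "c ` {..<n} = V" and finV: "finite V"
  and cyc: "\<And>k. {c k, c (Suc k)} \<in> E"
  and AB: "A \<inter> B = {}" "A \<union> B = V"
  and noA: "\<forall>e\<in>E. \<not> e \<subseteq> A"
  and W: "\<And>u v. {u,v} \<in> E \<Longrightarrow> u \<in> B \<Longrightarrow> v \<in> B \<Longrightarrow> u \<in> W"
  and Wc: "real (card W) \<le> 2*\<alpha>*n" and finW: "finite W"
  and Lc: "real (card {a\<in>A. real (deg_in E a B) < (1/2-\<eta>)*n}) \<le> \<alpha>*n"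
  and cB: "real (card B) \<le> (1+\<alpha>)*n/2"
  and Pb: "Pb \<subseteq> {p. p<n \<and> c p \<in> B}" "real (card Pb) \<ge> \<nu>*n"
  and Pa: "Pa \<subseteq> {q. q<n \<and> c q \<in> A}" "real (card Pa) \<ge> (1/4-\<eta>)*n"
  and par: "0<\<nu>" "0 \<le> \<eta>" "\<eta> \<le> 1/40" "0 \<le> \<alpha>" "\<alpha> \<le> \<nu>/12" "\<alpha> \<le> 1/32" "\<nu> * real n \<ge> 16" "n \<ge> 160"
  shows "real (card {(p,q). p\<in>Pb \<and> q\<in>Pa \<and> 2\<le>p \<and> p+3\<le>n \<and> 2\<le>q \<and> q+3\<le>n \<and> p\<noteq>q \<and>
      {c(p-1),c(q-1)}\<in>E \<and> {c(p-1),c(q+1)}\<in>E \<and> {c(p+1),c(q-1)}\<in>E \<and> {c(p+1),c(q+1)}\<in>E})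
     \<ge> \<nu>*n^2/128"
proof -
  define Lo where "Lo = {a\<in>A. real (deg_in E a B) < (1/2-\<eta>)*n}"
  define BV where "BV = W \<union> Lo"
  have finA: "finite A" and finB: "finite B" using AB finV by (auto intro: finite_subset)
  have finLo: "finite Lo" unfolding Lo_def using finA by simp
  have finBV: "finite BV" unfolding BV_def using finLo finW by simp
  have cBV: "real (card BV) \<le> 3*\<alpha>*n"
  proof -
    have "card BV \<le> card W + card Lo" unfolding BV_def by (rule card_Un_le)
    then show ?thesis using Wc Lc unfolding Lo_def by linarith
  qed
  have cin: "c k \<in> V" if "k < n" for k using cV that by auto
  have predA: "c (p-1) \<in> A" if "1 \<le> p" "p < n" "c p \<in> B" "c (p-1) \<notin> W" for p
  proof -
    have e: "{c (p-1), c p} \<in> E" using cyc[of "p-1"] that by simp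
    have "c (p-1) \<in> V" using cin that by simp
    moreover have "c (p-1) \<notin> B" using W[OF e] that by blast
    ultimately show ?thesis using AB by auto
  qed
  have succA: "c (p+1) \<in> A" if "p+1 < n" "c p \<in> B" "c (p+1) \<notin> W" for p
  proof -
    have e: "{c (p+1), c p} \<in> E" using cyc[of p] by (simp add: insert_commute)
    have "c (p+1) \<in> V" using cin that by simp
    moreover have "c (p+1) \<notin> B" using W[OF e] that by blast
    ultimately show ?thesis using AB by auto
  qed
  have predB: "c (q-1) \<in> B" if "1 \<le> q" "q < n" "c q \<in> A" for q
  proof -
    have e: "{c (q-1), c q} \<in> E" using cyc[of "q-1"] that by simp
    have "c (q-1) \<in> V" using cin that by simp
    moreover have "c (q-1) \<notin> A" using noA e that by auto
    ultimately show ?thesis using AB by auto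
  qed
  have succB: "c (q+1) \<in> B" if "q+1 < n" "c q \<in> A" for q
  proof -
    have e: "{c q, c (Suc q)} \<in> E" using cyc[of q] by simp
    have "c (q+1) \<in> V" using cin that by simp
    moreover have "c (q+1) \<notin> A" using noA e that by auto
    ultimately show ?thesis using AB by auto
  qed
  define NN where "NN a = {b\<in>B. {a,b} \<notin> E}" for a
  have cNN: "real (card (NN a)) \<le> (\<eta> + \<alpha>/2)*n" if "a \<in> A" "a \<notin> Lo" for a
  proof -
    have "deg_in E a B = card {u\<in>B. {a,u}\<in>E}" unfolding deg_in_def ..
    moreover have "card {u\<in>B. {a,u}\<in>E} + card (NN a) = card B"
    proof -
      have "{u\<in>B. {a,u}\<in>E} \<union> NN a = B" "{u\<in>B. {a,u}\<in>E} \<inter> NN a = {}" unfolding NN_def by auto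
      then show ?thesis using card_Un_disjoint[of "{u\<in>B. {a,u}\<in>E}" "NN a"] finB
        by (metis (no_types, lifting) finite_Un)
    qed
    moreover have "real (deg_in E a B) \<ge> (1/2-\<eta>)*n" using that unfolding Lo_def by auto
    ultimately show ?thesis using cB by (simp add: algebra_simps)
  qed
  have finNN: "finite (NN a)" for a unfolding NN_def using finB by simp
  define Gb where "Gb = {p\<in>Pb. 2\<le>p \<and> p+3\<le>n \<and> c (p-1) \<notin> BV \<and> c (p+1) \<notin> BV}"
  have cGb: "real (card Gb) \<ge> \<nu>*n/4"
  proof -
    define X0 where "X0 = {p. p < n \<and> \<not> (2 \<le> p \<and> p + 3 \<le> n)}"
    define X1 where "X1 = {q. 1\<le>q \<and> q<n \<and> c (q-1) \<in> BV}"
    define X2 where "X2 = {q. q+1<n \<and> c (q+1) \<in> BV}"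
    have "Pb \<subseteq> Gb \<union> X0 \<union> X1 \<union> X2" using Pb(1) unfolding Gb_def X0_def X1_def X2_def by auto
    moreover have "finite (Gb \<union> X0 \<union> X1 \<union> X2)"
      by (rule finite_subset[of _ "{..<n}"]) (use Pb(1) in \<open>auto simp: X0_def X1_def X2_def Gb_def\<close>)
    ultimately have "card Pb \<le> card (Gb \<union> X0 \<union> X1 \<union> X2)"
      by (simp add: card_mono)
    also have "\<dots> \<le> card Gb + card X0 + card X1 + card X2"
      by (meson add_right_mono card_Un_le le_trans)
    finally have "card Pb \<le> card Gb + card X0 + card X1 + card X2" .
    moreover have "card X0 \<le> 4" unfolding X0_def by (rule card_ends)
    moreover have "card X1 \<le> card BV" unfolding X1_def by (rule card_pred_le[OF inj finBV])
    moreover have "card X2 \<le> card BV" unfolding X2_def by (rule card_succ_le[OF inj finBV])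
    ultimately have "real (card Pb) \<le> real (card Gb) + 4 + 2 * real (card BV)" by linarith
    moreover have "\<alpha> * n \<le> \<nu>/12 * n" using par by (intro mult_right_mono) auto
    ultimately show ?thesis using Pb(2) cBV par by linarith
  qed
  define Ga where "Ga p = {q\<in>Pa. 2\<le>q \<and> q+3\<le>n \<and> {c(p-1),c(q-1)}\<in>E \<and> {c(p-1),c(q+1)}\<in>E \<and>
        {c(p+1),c(q-1)}\<in>E \<and> {c(p+1),c(q+1)}\<in>E}" for p
  have cGa: "real (card (Ga p)) \<ge> n/32" if pG: "p \<in> Gb" for p
  proof -
    have p: "p \<in> Pb" "2 \<le> p" "p+3 \<le> n" "c (p-1) \<notin> BV" "c (p+1) \<notin> BV" using pG unfolding Gb_def by auto
    have cpB: "c p \<in> B" using p Pb(1) by auto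
    have a1: "c (p-1) \<in> A" "c (p-1) \<notin> Lo" using predA[of p] p cpB unfolding BV_def by auto
    have a2: "c (p+1) \<in> A" "c (p+1) \<notin> Lo" using succA[of p] p cpB unfolding BV_def by auto
    define X0 where "X0 = {p. p < n \<and> \<not> (2 \<le> p \<and> p + 3 \<le> n)}"
    define Y1 where "Y1 = {q. 1\<le>q \<and> q<n \<and> c (q-1) \<in> NN (c (p-1))}"
    define Y2 where "Y2 = {q. q+1<n \<and> c (q+1) \<in> NN (c (p-1))}"
    define Y3 where "Y3 = {q. 1\<le>q \<and> q<n \<and> c (q-1) \<in> NN (c (p+1))}"
    define Y4 where "Y4 = {q. q+1<n \<and> c (q+1) \<in> NN (c (p+1))}"
    have "Pa \<subseteq> Ga p \<union> X0 \<union> Y1 \<union> Y2 \<union> Y3 \<union> Y4"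
    proof
      fix q assume q: "q \<in> Pa"
      then have qn: "q < n" "c q \<in> A" using Pa(1) by auto
      show "q \<in> Ga p \<union> X0 \<union> Y1 \<union> Y2 \<union> Y3 \<union> Y4"
      proof (cases "2 \<le> q \<and> q+3 \<le> n")
        case False then show ?thesis using qn unfolding X0_def by auto
      next
        case True
        have b1: "c (q-1) \<in> B" using predB[of q] True qn by auto
        have b2: "c (q+1) \<in> B" using succB[of q] True qn by auto
        show ?thesis using True q qn b1 b2 unfolding Ga_def Y1_def Y2_def Y3_def Y4_def NN_def by auto
      qed
    qed
    moreover have "finite (Ga p \<union> X0 \<union> Y1 \<union> Y2 \<union> Y3 \<union> Y4)"
      by (rule finite_subset[of _ "{..<n}"]) (use Pa(1) in \<open>auto simp: X0_def Y1_def Y2_def Y3_def Y4_def Ga_def\<close>)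
    ultimately have "card Pa \<le> card (Ga p \<union> X0 \<union> Y1 \<union> Y2 \<union> Y3 \<union> Y4)"
      by (simp add: card_mono)
    also have "\<dots> \<le> card (Ga p) + card X0 + card Y1 + card Y2 + card Y3 + card Y4"
      by (meson add_right_mono card_Un_le le_trans)
    finally have "card Pa \<le> card (Ga p) + card X0 + card Y1 + card Y2 + card Y3 + card Y4" .
    moreover have "card X0 \<le> 4" unfolding X0_def by (rule card_ends)
    moreover have "card Y1 \<le> card (NN (c (p-1)))" unfolding Y1_def by (rule card_pred_le[OF inj finNN])
    moreover have "card Y2 \<le> card (NN (c (p-1)))" unfolding Y2_def by (rule card_succ_le[OF inj finNN])
    moreover have "card Y3 \<le> card (NN (c (p+1)))" unfolding Y3_def by (rule card_pred_le[OF inj finNN])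
    moreover have "card Y4 \<le> card (NN (c (p+1)))" unfolding Y4_def by (rule card_succ_le[OF inj finNN])
    moreover have "real (card (NN (c (p-1)))) \<le> (\<eta> + \<alpha>/2)*n" using cNN a1 by blast
    moreover have "real (card (NN (c (p+1)))) \<le> (\<eta> + \<alpha>/2)*n" using cNN a2 by blast
    ultimately have "real (card Pa) \<le> real (card (Ga p)) + 4 + 4*((\<eta> + \<alpha>/2)*n)" by linarith
    moreover have "\<eta> * n \<le> n/40" "\<alpha> * n \<le> n/32" using par by (auto intro: mult_right_mono)
    moreover have "4*((\<eta> + \<alpha>/2)*n) = 4*(\<eta>*n) + 2*(\<alpha>*n)" "(1/4-\<eta>)*n = n/4 - \<eta>*n"
      by (simp_all add: algebra_simps)
    ultimately show ?thesis using Pa(2) par by linarith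
  qed
  define Good where "Good = {(p,q). p\<in>Pb \<and> q\<in>Pa \<and> 2\<le>p \<and> p+3\<le>n \<and> 2\<le>q \<and> q+3\<le>n \<and> p\<noteq>q \<and>
      {c(p-1),c(q-1)}\<in>E \<and> {c(p-1),c(q+1)}\<in>E \<and> {c(p+1),c(q-1)}\<in>E \<and> {c(p+1),c(q+1)}\<in>E}"
  have finPb: "finite Pb" using Pb(1) by (rule finite_subset) auto
  have finPa: "finite Pa" using Pa(1) by (rule finite_subset) auto
  have "Sigma Gb Ga \<subseteq> Good"
  proof
    fix z assume "z \<in> Sigma Gb Ga"
    then obtain p q where z: "z = (p,q)" "p \<in> Gb" "q \<in> Ga p" by auto
    have "c p \<in> B" "c q \<in> A" using z Pb(1) Pa(1) unfolding Gb_def Ga_def by auto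
    then have "p \<noteq> q" using AB by auto
    then show "z \<in> Good" using z unfolding Good_def Gb_def Ga_def by auto
  qed
  moreover have "finite Good" unfolding Good_def
    by (rule finite_subset[of _ "Pb \<times> Pa"]) (auto simp: finPb finPa)
  ultimately have le1: "card (Sigma Gb Ga) \<le> card Good" by (rule card_mono[rotated])
  have eq1: "card (Sigma Gb Ga) = (\<Sum>p\<in>Gb. card (Ga p))"
    by (rule card_SigmaI) (auto simp: Gb_def Ga_def intro: finite_subset[OF _ finPb] finite_subset[OF _ finPa])
  have le2: "real (card Gb) * (n/32) \<le> (\<Sum>p\<in>Gb. real (card (Ga p)))"
    by (rule sum_bounded_below) (rule cGa)
  have le3: "(\<nu>*n/4) * (n/32) \<le> real (card Gb) * (n/32)"
    using cGb by (intro mult_right_mono) auto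
  have eq2: "real (card (Sigma Gb Ga)) = (\<Sum>p\<in>Gb. real (card (Ga p)))"
    unfolding eq1 by (rule of_nat_sum)
  have le4: "real (card (Sigma Gb Ga)) \<le> real (card Good)" using le1 by (rule of_nat_mono)
  have eq3: "\<nu>*n^2/128 = (\<nu>*n/4) * (n/32)" by (simp add: power2_eq_square)
  have "\<nu>*n^2/128 \<le> real (card Good)" using le2 le3 le4 eq2 eq3 by linarith
  then show ?thesis unfolding Good_def .
qed




lemma cyc_pos_eq:
  assumes "inj_on c {..<n}" "a < n" "b < n" "c a = c b" shows "a = b"
  using assms unfolding inj_on_def by auto

lemma not_ham:
  assumes H: "dir_ham_cycle V E \<pi>" and xV: "x \<in> V" and n: "card V = n"
    and ij: "1 \<le> i" "i + 2 \<le> j" "j + 2 \<le> n"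
  shows "{(\<pi>^^i) x, (\<pi>^^j) x} \<notin> ham_edges V \<pi>"
proof
  define c where "c = (\<lambda>k. (\<pi>^^k) x)"
  note cb = cyc_basic[OF H xV n]
  have inj: "inj_on c {..<n}" and img: "c ` {..<n} = V" and cn: "c n = x"
    using cb unfolding c_def by auto
  assume "{(\<pi>^^i) x, (\<pi>^^j) x} \<in> ham_edges V \<pi>"
  then obtain y where y: "y \<in> V" "{c i, c j} = {y, \<pi> y}" unfolding ham_edges_def c_def by auto
  then obtain k where k: "k < n" "y = c k" using img by auto
  have py: "\<pi> y = c (Suc k)" using k unfolding c_def by simp
  have EE: "{c i, c j} = {c k, \<pi> y}" using y(2) k(2) by simp
  have ci: "c i \<in> {c k, \<pi> y}" using EE by blast
  have cj: "c j \<in> {c k, \<pi> y}" using EE by blast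
  have ijn: "i < n" "j < n" using ij by auto
  show False
  proof (cases "Suc k < n")
    case True
    have "c i = c k \<or> c i = c (Suc k)" using ci py by simp
    then have "i = k \<or> i = Suc k"
      using cyc_pos_eq[OF inj ijn(1) k(1)] cyc_pos_eq[OF inj ijn(1) True] by blast
    moreover have "c j = c k \<or> c j = c (Suc k)" using cj py by simp
    then have "j = k \<or> j = Suc k"
      using cyc_pos_eq[OF inj ijn(2) k(1)] cyc_pos_eq[OF inj ijn(2) True] by blast
    ultimately show False using ij by linarith
  next
    case False
    then have sk: "Suc k = n" using k by simp
    then have p0: "\<pi> y = c 0" using py cn unfolding c_def by simp
    have n0: "0 < n" using k by simp
    have "c i = c k \<or> c i = c 0" using ci p0 by simp
    then have "i = k \<or> i = 0"
      using cyc_pos_eq[OF inj ijn(1) k(1)] cyc_pos_eq[OF inj ijn(1) n0] by blast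
    moreover have "c j = c k \<or> c j = c 0" using cj p0 by simp
    then have "j = k \<or> j = 0"
      using cyc_pos_eq[OF inj ijn(2) k(1)] cyc_pos_eq[OF inj ijn(2) n0] by blast
    ultimately show False using ij sk by linarith
  qed
qed

lemma on_path:
  assumes H: "dir_ham_cycle V E \<pi>" and xV: "x \<in> V" and n: "card V = n"
    and ij: "i < j" "j < n"
  shows "on_dir_path \<pi> ((\<pi>^^j) x) ((\<pi>^^i) x) x"
proof -
  define c where "c = (\<lambda>k. (\<pi>^^k) x)"
  note cb = cyc_basic[OF H xV n]
  have inj: "inj_on c {..<n}" and cn: "c n = x"
    using cb unfolding c_def by auto
  have sh: "(\<pi>^^m) (c j) = c (m + j)" for m unfolding c_def by (simp add: funpow_add)
  have per: "c (n + r) = c r" for r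
    using funpow_period[where f=\<pi> and d=n and x=x and m=1 and r=r] cn unfolding c_def by simp
  have cj: "(\<pi>^^j) x = c j" unfolding c_def ..
  have ci: "(\<pi>^^i) x = c i" unfolding c_def ..
  show ?thesis unfolding on_dir_path_def cj ci
  proof (rule exI[of _ "n-j"], rule exI[of _ "n-j+i"], intro conjI)
    show "n - j \<le> n - j + i" by simp
    show "(\<pi>^^(n-j)) (c j) = x" using sh ij cn by simp
    show "(\<pi>^^(n-j+i)) (c j) = c i" using sh ij per by (simp add: add.commute)
    show "\<forall>m<n - j + i. (\<pi>^^m) (c j) \<noteq> c i"
    proof (intro allI impI)
      fix m assume m: "m < n - j + i"
      show "(\<pi>^^m) (c j) \<noteq> c i"
      proof (cases "m + j < n")
        case True
        then show ?thesis using sh cyc_pos_eq[OF inj, of "m+j" i] ij by auto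
      next
        case False
        then obtain r where r: "m + j = n + r" by (metis le_Suc_ex not_less)
        then have "r < i" using m ij by linarith
        then show ?thesis using sh r per cyc_pos_eq[OF inj, of r i] ij by auto
      qed
    qed
  qed
qed

lemma pinv_c:
  assumes H: "dir_ham_cycle V E \<pi>" and xV: "x \<in> V" and n: "card V = n" and j: "1 \<le> j"
  shows "inv_into V \<pi> ((\<pi>^^j) x) = (\<pi>^^(j-1)) x"
proof -
  note cb = cyc_basic[OF H xV n]
  have "(\<pi>^^j) x = \<pi> ((\<pi>^^(j-1)) x)" using j by (cases j) auto
  then show ?thesis using inv_into_f_f[OF cb(8) cb(4)] by simp
qed

lemma ham_sub: "dir_ham_cycle V E \<pi> \<Longrightarrow> ham_edges V \<pi> \<subseteq> E"
  unfolding dir_ham_cycle_def ham_edges_def by auto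

lemma adm1:
  assumes H: "dir_ham_cycle V E \<pi>" and xV: "x \<in> V" and n: "card V = n"
    and ij: "1 \<le> i" "i + 2 \<le> j" "j + 2 \<le> n"
    and e1: "{(\<pi>^^i) x, (\<pi>^^j) x} \<in> E" and e2: "{x, (\<pi>^^(i+1)) x} \<in> E"
    and e3: "{(\<pi>^^(j-1)) x, \<pi> x} \<in> E"
  shows "({(\<pi>^^i) x, (\<pi>^^j) x}, 1::nat) \<in> {(e', i). e' \<in> E - ham_edges V \<pi> \<and> i \<in> {1::nat, 2} \<and>
                                  admissible_switch V E \<pi> x e' i}"
proof -
  have "admissible_switch V E \<pi> x {(\<pi>^^i) x, (\<pi>^^j) x} 1"
    unfolding admissible_switch_def
  proof (intro exI conjI)
    show "on_dir_path \<pi> ((\<pi>^^j) x) ((\<pi>^^i) x) x" using on_path[OF H xV n] ij by simp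
    have "inv_into V \<pi> ((\<pi>^^j) x) = (\<pi>^^(j-1)) x" using pinv_c[OF H xV n] ij by simp
    then show "switch_edges 1 V \<pi> x ((\<pi>^^i) x) ((\<pi>^^j) x) \<subseteq> E"
      unfolding switch_edges_def Let_def using ham_sub[OF H] e1 e2 e3 by auto
  qed simp
  then show ?thesis using e1 not_ham[OF H xV n ij] by simp
qed

lemma adm2:
  assumes H: "dir_ham_cycle V E \<pi>" and xV: "x \<in> V" and n: "card V = n"
    and ij: "1 \<le> i" "i + 2 \<le> j" "j + 2 \<le> n"
    and e1: "{(\<pi>^^i) x, (\<pi>^^j) x} \<in> E" and e2: "{x, (\<pi>^^(j-1)) x} \<in> E"
    and e3: "{\<pi> x, (\<pi>^^(i+1)) x} \<in> E"
  shows "({(\<pi>^^i) x, (\<pi>^^j) x}, 2::nat) \<in> {(e', i). e' \<in> E - ham_edges V \<pi> \<and> i \<in> {1::nat, 2} \<and>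
                                  admissible_switch V E \<pi> x e' i}"
proof -
  have "admissible_switch V E \<pi> x {(\<pi>^^i) x, (\<pi>^^j) x} 2"
    unfolding admissible_switch_def
  proof (intro exI conjI)
    show "on_dir_path \<pi> ((\<pi>^^j) x) ((\<pi>^^i) x) x" using on_path[OF H xV n] ij by simp
    have "inv_into V \<pi> ((\<pi>^^j) x) = (\<pi>^^(j-1)) x" using pinv_c[OF H xV n] ij by simp
    then show "switch_edges 2 V \<pi> x ((\<pi>^^i) x) ((\<pi>^^j) x) \<subseteq> E"
      unfolding switch_edges_def Let_def using ham_sub[OF H] e1 e2 e3 by auto
  qed simp
  then show ?thesis using e1 not_ham[OF H xV n ij] by simp
qed




lemma main_lemma:
  fixes V :: "'a set" and E :: "'a set set" and \<eta> \<nu> \<alpha> :: real and n :: nat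
  assumes par: "0<\<eta>" "\<eta> \<le> 1/40" "0<\<nu>" "0<\<alpha>" "\<alpha> \<le> \<nu>/12" "\<alpha> \<le> 1/32" "\<nu> * real n \<ge> 16" "n \<ge> 160"
  and n: "card V = n" and se: "superextremal_biclique \<alpha> \<eta> \<nu> V E A B"
  and mt: "matching_in E B M" and cM: "real (card M) \<le> \<alpha> * real n"
  and noA: "\<forall>e\<in>E. \<not> e \<subseteq> A" and EB: "{e \<in> E. e \<subseteq> B} = M"
  and H: "dir_ham_cycle V E \<pi>" and xV: "x \<in> V" and xM: "{x, \<pi> x} \<notin> M"
  shows "\<nu>*n^2/128 \<le> real (card {(e', i). e' \<in> E - ham_edges V \<pi> \<and> i \<in> {1::nat, 2} \<and>
                                  admissible_switch V E \<pi> x e' i})"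
proof -
  define T where "T = {(e', i). e' \<in> E - ham_edges V \<pi> \<and> i \<in> {1::nat, 2} \<and> admissible_switch V E \<pi> x e' i}"
  define c where "c = (\<lambda>k. (\<pi>^^k) x)"
  note cb = cyc_basic[OF H xV n]
  have inj: "inj_on c {..<n}" and img: "c ` {..<n} = V" and cn: "c n = x" and finV: "finite V"
    and cyc: "\<And>k. {c k, c (Suc k)} \<in> E" and cV: "\<And>k. c k \<in> V"
    using cb unfolding c_def by auto
  have c0: "c 0 = x" and c1: "c 1 = \<pi> x" unfolding c_def by auto
  have sg: "simple_graph V E" and AB: "A \<inter> B = {}" "A \<union> B = V"
    and dBA: "real (card B) - real (card A) \<le> \<alpha> * n"
    and Lc: "real (card {a \<in> A. real (deg_in E a B) < (1/2 - \<eta>) * n}) \<le> \<alpha> * n"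
    and dA: "\<forall>a\<in>A. real (deg_in E a B) \<ge> \<nu> * n"
    and dB: "\<forall>b\<in>B. real (deg_in E b A) \<ge> (1/4 - \<eta>) * n"
    using se n unfolding superextremal_biclique_def Let_def by auto
  have Esub: "\<And>e. e \<in> E \<Longrightarrow> \<exists>u v. e = {u,v} \<and> u \<in> V \<and> v \<in> V" using sg unfolding simple_graph_def by blast
  have finE: "finite E"
    by (rule finite_subset[of _ "Pow V"]) (use Esub finV in auto)
  have finA: "finite A" and finB: "finite B" using AB finV by (auto intro: finite_subset)
  have "card A + card B = n" using card_Un_disjoint[OF finA finB] AB n by simp
  then have cB: "real (card B) \<le> (1+\<alpha>)*n/2" using dBA by (simp add: algebra_simps)
  define W where "W = \<Union>M"
  have MsubE: "M \<subseteq> E" using mt unfolding matching_in_def by auto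
  have finM: "finite M" using finite_subset[OF MsubE finE] .
  have finW: "finite W" unfolding W_def
    by (rule finite_subset[OF _ finV]) (use MsubE Esub in blast)
  have Wc: "real (card W) \<le> 2*\<alpha>*n"
  proof -
    have "card W \<le> sum card M" unfolding W_def by (rule card_Union_le_sum_card)
    also have "\<dots> \<le> sum (\<lambda>_. 2) M"
    proof (rule sum_mono)
      fix e assume "e \<in> M"
      then obtain u v where "e = {u,v}" using Esub MsubE by blast
      then show "card e \<le> 2" by (simp add: card_insert_if)
    qed
    also have "\<dots> = 2 * card M" by simp
    finally show ?thesis using cM by simp
  qed
  have Wp: "\<And>u v. {u,v} \<in> E \<Longrightarrow> u \<in> B \<Longrightarrow> v \<in> B \<Longrightarrow> u \<in> W"
  proof -
    fix u v assume "{u,v} \<in> E" "u \<in> B" "v \<in> B"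
    then have "{u,v} \<in> M" using EB by blast
    then show "u \<in> W" unfolding W_def by blast
  qed
  have e01: "{c 0, c 1} \<in> E" using cyc[of 0] by simp
  have e01M: "{c 0, c 1} \<notin> M" using xM c0 c1 by simp
  define Good where "Good = {(p,q). p<n \<and> q<n \<and> {c 0, c p}\<in>E \<and> {c 1, c q}\<in>E \<and>
      2\<le>p \<and> p+3\<le>n \<and> 2\<le>q \<and> q+3\<le>n \<and> p\<noteq>q \<and>
      {c(p-1),c(q-1)}\<in>E \<and> {c(p-1),c(q+1)}\<in>E \<and> {c(p+1),c(q-1)}\<in>E \<and> {c(p+1),c(q+1)}\<in>E}"
  have finGood: "finite Good" unfolding Good_def
    by (rule finite_subset[of _ "{..<n} \<times> {..<n}"]) auto
  have cardPb: "card {p. p<n \<and> c p \<in> B \<and> {u, c p} \<in> E} = deg_in E u B" for u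
  proof -
    have i1: "c ` {p. p<n \<and> c p \<in> B \<and> {u, c p} \<in> E} \<subseteq> {v\<in>B. {u,v}\<in>E}" by blast
    have i2: "{v\<in>B. {u,v}\<in>E} \<subseteq> c ` {p. p<n \<and> c p \<in> B \<and> {u, c p} \<in> E}"
    proof
      fix v assume v: "v \<in> {v\<in>B. {u,v}\<in>E}"
      then have "v \<in> c ` {..<n}" using img AB by blast
      then obtain p where "p < n" "v = c p" by blast
      then show "v \<in> c ` {p. p<n \<and> c p \<in> B \<and> {u, c p} \<in> E}" using v by blast
    qed
    have i3: "inj_on c {p. p<n \<and> c p \<in> B \<and> {u, c p} \<in> E}"
      by (rule inj_on_subset[OF inj]) blast
    have "card {p. p<n \<and> c p \<in> B \<and> {u, c p} \<in> E} = card (c ` {p. p<n \<and> c p \<in> B \<and> {u, c p} \<in> E})"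
      using card_image[OF i3] by simp
    also have "\<dots> = card {v\<in>B. {u,v}\<in>E}" using i1 i2 by (simp add: subset_antisym)
    finally show ?thesis unfolding deg_in_def .
  qed
  have cardPa: "card {p. p<n \<and> c p \<in> A \<and> {u, c p} \<in> E} = deg_in E u A" for u
  proof -
    have i1: "c ` {p. p<n \<and> c p \<in> A \<and> {u, c p} \<in> E} \<subseteq> {v\<in>A. {u,v}\<in>E}" by blast
    have i2: "{v\<in>A. {u,v}\<in>E} \<subseteq> c ` {p. p<n \<and> c p \<in> A \<and> {u, c p} \<in> E}"
    proof
      fix v assume v: "v \<in> {v\<in>A. {u,v}\<in>E}"
      then have "v \<in> c ` {..<n}" using img AB by blast
      then obtain p where "p < n" "v = c p" by blast
      then show "v \<in> c ` {p. p<n \<and> c p \<in> A \<and> {u, c p} \<in> E}" using v by blast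
    qed
    have i3: "inj_on c {p. p<n \<and> c p \<in> A \<and> {u, c p} \<in> E}"
      by (rule inj_on_subset[OF inj]) blast
    have "card {p. p<n \<and> c p \<in> A \<and> {u, c p} \<in> E} = card (c ` {p. p<n \<and> c p \<in> A \<and> {u, c p} \<in> E})"
      using card_image[OF i3] by simp
    also have "\<dots> = card {v\<in>A. {u,v}\<in>E}" using i1 i2 by (simp add: subset_antisym)
    finally show ?thesis unfolding deg_in_def .
  qed
  have cGood: "\<nu>*n^2/128 \<le> real (card Good)"
  proof (cases "c 0 \<in> A")
    case True
    then have "c 1 \<notin> A" using noA e01 by auto
    then have c1B: "c 1 \<in> B" using AB cV by auto
    let ?Pb = "{p. p<n \<and> c p \<in> B \<and> {c 0, c p} \<in> E}"
    let ?Pa = "{p. p<n \<and> c p \<in> A \<and> {c 1, c p} \<in> E}"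
    have "\<nu>*n^2/128 \<le> real (card {(p,q). p\<in>?Pb \<and> q\<in>?Pa \<and> 2\<le>p \<and> p+3\<le>n \<and> 2\<le>q \<and> q+3\<le>n \<and> p\<noteq>q \<and>
      {c(p-1),c(q-1)}\<in>E \<and> {c(p-1),c(q+1)}\<in>E \<and> {c(p+1),c(q-1)}\<in>E \<and> {c(p+1),c(q+1)}\<in>E})"
    proof (rule core_count[where c=c and n=n and V=V and E=E and A=A and B=B and W=W and \<alpha>=\<alpha> and \<eta>=\<eta> and \<nu>=\<nu>
        and Pb="{p. p<n \<and> c p \<in> B \<and> {c 0, c p} \<in> E}" and Pa="{p. p<n \<and> c p \<in> A \<and> {c 1, c p} \<in> E}", OF inj img finV cyc AB noA _ Wc finW Lc cB])
      show "\<And>u v. {u, v} \<in> E \<Longrightarrow> u \<in> B \<Longrightarrow> v \<in> B \<Longrightarrow> u \<in> W" by (rule Wp)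
      show "{p. p<n \<and> c p \<in> B \<and> {c 0, c p} \<in> E} \<subseteq> {p. p < n \<and> c p \<in> B}" "{p. p<n \<and> c p \<in> A \<and> {c 1, c p} \<in> E} \<subseteq> {p. p < n \<and> c p \<in> A}" by auto
      have "c 0 \<in> A" "c 1 \<in> B" using True c1B by auto
      then show "\<nu> * real n \<le> real (card {p. p<n \<and> c p \<in> B \<and> {c 0, c p} \<in> E})" "(1/4 - \<eta>) * real n \<le> real (card {p. p<n \<and> c p \<in> A \<and> {c 1, c p} \<in> E})"
        using dA dB cardPb cardPa by auto
    qed (use par in auto)
    also have "\<dots> \<le> real (card Good)"
      by (intro of_nat_mono card_mono[OF finGood]) (auto simp: Good_def)
    finally show ?thesis .
  next
    case False
    then have c0B: "c 0 \<in> B" using AB cV by auto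
    have "c 1 \<notin> B" using EB e01 e01M c0B by auto
    then have c1A: "c 1 \<in> A" using AB cV by auto
    let ?Pb = "{p. p<n \<and> c p \<in> B \<and> {c 1, c p} \<in> E}"
    let ?Pa = "{p. p<n \<and> c p \<in> A \<and> {c 0, c p} \<in> E}"
    define S where "S = {(p,q). p\<in>?Pb \<and> q\<in>?Pa \<and> 2\<le>p \<and> p+3\<le>n \<and> 2\<le>q \<and> q+3\<le>n \<and> p\<noteq>q \<and>
      {c(p-1),c(q-1)}\<in>E \<and> {c(p-1),c(q+1)}\<in>E \<and> {c(p+1),c(q-1)}\<in>E \<and> {c(p+1),c(q+1)}\<in>E}"
    have "\<nu>*n^2/128 \<le> real (card S)" unfolding S_def
    proof (rule core_count[where c=c and n=n and V=V and E=E and A=A and B=B and W=W and \<alpha>=\<alpha> and \<eta>=\<eta> and \<nu>=\<nu>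
        and Pb="{p. p<n \<and> c p \<in> B \<and> {c 1, c p} \<in> E}" and Pa="{p. p<n \<and> c p \<in> A \<and> {c 0, c p} \<in> E}", OF inj img finV cyc AB noA _ Wc finW Lc cB])
      show "\<And>u v. {u, v} \<in> E \<Longrightarrow> u \<in> B \<Longrightarrow> v \<in> B \<Longrightarrow> u \<in> W" by (rule Wp)
      show "{p. p<n \<and> c p \<in> B \<and> {c 1, c p} \<in> E} \<subseteq> {p. p < n \<and> c p \<in> B}" "{p. p<n \<and> c p \<in> A \<and> {c 0, c p} \<in> E} \<subseteq> {p. p < n \<and> c p \<in> A}" by auto
      have "c 1 \<in> A" "c 0 \<in> B" using c0B c1A by auto
      then show "\<nu> * real n \<le> real (card {p. p<n \<and> c p \<in> B \<and> {c 1, c p} \<in> E})" "(1/4 - \<eta>) * real n \<le> real (card {p. p<n \<and> c p \<in> A \<and> {c 0, c p} \<in> E})"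
        using dA dB cardPb cardPa by auto
    qed (use par in auto)
    also have "card S = card ((\<lambda>(p,q). (q,p)) ` S)"
      by (rule card_image[symmetric]) (auto simp: inj_on_def)
    also have "\<dots> \<le> card Good"
      by (intro card_mono[OF finGood]) (auto simp: Good_def S_def insert_commute)
    finally show ?thesis by simp
  qed
  define g where "g = (\<lambda>(p,q). if p < q then ({c (p-1), c (q+1)}, 1::nat) else ({c (q-1), c (p+1)}, 2))"
  have gT: "g z \<in> T" if "z \<in> Good" for z
  proof -
    obtain p q where z: "z = (p,q)" by fastforce
    have G: "p<n" "q<n" "{c 0, c p}\<in>E" "{c 1, c q}\<in>E" "2\<le>p" "p+3\<le>n" "2\<le>q" "q+3\<le>n" "p\<noteq>q"
      "{c(p-1),c(q-1)}\<in>E" "{c(p-1),c(q+1)}\<in>E" "{c(p+1),c(q-1)}\<in>E" "{c(p+1),c(q+1)}\<in>E"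
      using that z unfolding Good_def by auto
    show ?thesis
    proof (cases "p < q")
      case True
      have "({c (p-1), c (q+1)}, 1::nat) \<in> T" unfolding T_def c_def
        by (rule adm1[OF H xV n]) (use G True in \<open>auto simp: c_def insert_commute\<close>)
      then show ?thesis using True z g_def by simp
    next
      case False
      then have qp: "q < p" using G by simp
      have "({c (q-1), c (p+1)}, 2::nat) \<in> T" unfolding T_def c_def
        by (rule adm2[OF H xV n]) (use G qp in \<open>auto simp: c_def insert_commute\<close>)
      then show ?thesis using False z g_def by simp
    qed
  qed
  have ginj: "inj_on g Good"
  proof (rule inj_onI)
    fix z w assume zw: "z \<in> Good" "w \<in> Good" "g z = g w"
    obtain p q where z: "z = (p,q)" by fastforce
    obtain p' q' where w: "w = (p',q')" by fastforce
    have G: "p<n" "q<n" "2\<le>p" "p+3\<le>n" "2\<le>q" "q+3\<le>n" "p\<noteq>q"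
         "p'<n" "q'<n" "2\<le>p'" "p'+3\<le>n" "2\<le>q'" "q'+3\<le>n" "p'\<noteq>q'"
      using zw z w unfolding Good_def by auto
    have pos: "a = a' \<and> b = b'" if "{c a, c b} = {c a', c b'}" "a < b" "a' < b'" "b < n" "b' < n" for a b a' b'
    proof -
      have "(c a = c a' \<and> c b = c b') \<or> (c a = c b' \<and> c b = c a')" using that(1) by (auto simp: doubleton_eq_iff)
      then have "(a = a' \<and> b = b') \<or> (a = b' \<and> b = a')"
        using cyc_pos_eq[OF inj] that by (meson order.strict_trans)
      then show ?thesis using that by auto
    qed
    show "z = w"
    proof (cases "p < q")
      case True
      then have "p' < q'" using zw z w g_def by (auto split: if_splits)
      then have "{c (p-1), c (q+1)} = {c (p'-1), c (q'+1)}" using True zw z w g_def by auto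
      then have "p - 1 = p' - 1 \<and> q + 1 = q' + 1" by (rule pos) (use G True \<open>p'<q'\<close> in auto)
      then show ?thesis using z w G by auto
    next
      case False
      then have "\<not> p' < q'" using zw z w g_def by (auto split: if_splits)
      then have "{c (q-1), c (p+1)} = {c (q'-1), c (p'+1)}" using False zw z w g_def by auto
      then have "q - 1 = q' - 1 \<and> p + 1 = p' + 1" by (rule pos) (use G False \<open>\<not> p'<q'\<close> in auto)
      then show ?thesis using z w G by auto
    qed
  qed
  have finT: "finite T" unfolding T_def
    by (rule finite_subset[of _ "E \<times> {1,2}"]) (use finE in auto)
  have "card Good \<le> card T"
    by (rule card_inj_on_le[OF ginj _ finT]) (use gT in auto)
  then show ?thesis using cGood unfolding T_def by linarith
qed



theorem mainTheorem14:
  shows "\<exists>\<eta>0>0. \<forall>\<eta>. 0 < \<eta> \<and> \<eta> \<le> \<eta>0 \<longrightarrow>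
    (\<exists>\<nu>0>0. \<forall>\<nu>. 0 < \<nu> \<and> \<nu> \<le> \<nu>0 \<longrightarrow>
    (\<exists>\<beta>0>0. \<forall>\<beta>. 0 < \<beta> \<and> \<beta> \<le> \<beta>0 \<longrightarrow>
    (\<exists>\<alpha>0>0. \<forall>\<alpha>. 0 < \<alpha> \<and> \<alpha> \<le> \<alpha>0 \<longrightarrow>
    (\<exists>n0::nat. \<forall>n\<ge>n0. \<forall>(V::'a set) (E::'a set set) A B M \<pi>.
       card V = n \<and>
       superextremal_biclique \<alpha> \<eta> \<nu> V E A B \<and>
       matching_in E B M \<and> real (card M) \<le> \<alpha> * real n \<and>
       (\<forall>e\<in>E. \<not> e \<subseteq> A) \<and>
       {e \<in> E. e \<subseteq> B} = M \<and>
       (\<forall>a\<in>A. \<forall>b\<in>B. {a, b} \<in> E \<longrightarrow>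
          real (max (deg_in E a B) (deg_in E b A)) \<ge> (1/2 - \<eta>) * real n) \<and>
       dir_ham_cycle V E \<pi>
       \<longrightarrow> (\<forall>x\<in>V. {x, \<pi> x} \<notin> M \<longrightarrow>
             real (card {(e', i). e' \<in> E - ham_edges V \<pi> \<and> i \<in> {1::nat, 2} \<and>
                                  admissible_switch V E \<pi> x e' i})
               \<ge> \<beta> * (real n)^2)))))"
proof (rule exI[of _ "1/40"], intro conjI allI impI)
  fix \<eta> :: real assume h\<eta>: "0 < \<eta> \<and> \<eta> \<le> 1/40"
  show "\<exists>\<nu>0>0. \<forall>\<nu>. 0 < \<nu> \<and> \<nu> \<le> \<nu>0 \<longrightarrow>
    (\<exists>\<beta>0>0. \<forall>\<beta>. 0 < \<beta> \<and> \<beta> \<le> \<beta>0 \<longrightarrow>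
    (\<exists>\<alpha>0>0. \<forall>\<alpha>. 0 < \<alpha> \<and> \<alpha> \<le> \<alpha>0 \<longrightarrow>
    (\<exists>n0::nat. \<forall>n\<ge>n0. \<forall>(V::'a set) (E::'a set set) A B M \<pi>.
       card V = n \<and>
       superextremal_biclique \<alpha> \<eta> \<nu> V E A B \<and>
       matching_in E B M \<and> real (card M) \<le> \<alpha> * real n \<and>
       (\<forall>e\<in>E. \<not> e \<subseteq> A) \<and>
       {e \<in> E. e \<subseteq> B} = M \<and>
       (\<forall>a\<in>A. \<forall>b\<in>B. {a, b} \<in> E \<longrightarrow>
          real (max (deg_in E a B) (deg_in E b A)) \<ge> (1/2 - \<eta>) * real n) \<and>
       dir_ham_cycle V E \<pi>
       \<longrightarrow> (\<forall>x\<in>V. {x, \<pi> x} \<notin> M \<longrightarrow>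
             real (card {(e', i). e' \<in> E - ham_edges V \<pi> \<and> i \<in> {1::nat, 2} \<and>
                                  admissible_switch V E \<pi> x e' i})
               \<ge> \<beta> * (real n)^2))))"
  proof (rule exI[of _ 1], intro conjI allI impI)
    fix \<nu> :: real assume h\<nu>: "0 < \<nu> \<and> \<nu> \<le> 1"
    show "\<exists>\<beta>0>0. \<forall>\<beta>. 0 < \<beta> \<and> \<beta> \<le> \<beta>0 \<longrightarrow>
    (\<exists>\<alpha>0>0. \<forall>\<alpha>. 0 < \<alpha> \<and> \<alpha> \<le> \<alpha>0 \<longrightarrow>
    (\<exists>n0::nat. \<forall>n\<ge>n0. \<forall>(V::'a set) (E::'a set set) A B M \<pi>.
       card V = n \<and>
       superextremal_biclique \<alpha> \<eta> \<nu> V E A B \<and>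
       matching_in E B M \<and> real (card M) \<le> \<alpha> * real n \<and>
       (\<forall>e\<in>E. \<not> e \<subseteq> A) \<and>
       {e \<in> E. e \<subseteq> B} = M \<and>
       (\<forall>a\<in>A. \<forall>b\<in>B. {a, b} \<in> E \<longrightarrow>
          real (max (deg_in E a B) (deg_in E b A)) \<ge> (1/2 - \<eta>) * real n) \<and>
       dir_ham_cycle V E \<pi>
       \<longrightarrow> (\<forall>x\<in>V. {x, \<pi> x} \<notin> M \<longrightarrow>
             real (card {(e', i). e' \<in> E - ham_edges V \<pi> \<and> i \<in> {1::nat, 2} \<and>
                                  admissible_switch V E \<pi> x e' i})
               \<ge> \<beta> * (real n)^2)))"
    proof (rule exI[of _ "\<nu>/128"], intro conjI allI impI)
      show "0 < \<nu>/128" using h\<nu> by simp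
      fix \<beta> :: real assume h\<beta>: "0 < \<beta> \<and> \<beta> \<le> \<nu>/128"
      show "\<exists>\<alpha>0>0. \<forall>\<alpha>. 0 < \<alpha> \<and> \<alpha> \<le> \<alpha>0 \<longrightarrow>
    (\<exists>n0::nat. \<forall>n\<ge>n0. \<forall>(V::'a set) (E::'a set set) A B M \<pi>.
       card V = n \<and>
       superextremal_biclique \<alpha> \<eta> \<nu> V E A B \<and>
       matching_in E B M \<and> real (card M) \<le> \<alpha> * real n \<and>
       (\<forall>e\<in>E. \<not> e \<subseteq> A) \<and>
       {e \<in> E. e \<subseteq> B} = M \<and>
       (\<forall>a\<in>A. \<forall>b\<in>B. {a, b} \<in> E \<longrightarrow>
          real (max (deg_in E a B) (deg_in E b A)) \<ge> (1/2 - \<eta>) * real n) \<and>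
       dir_ham_cycle V E \<pi>
       \<longrightarrow> (\<forall>x\<in>V. {x, \<pi> x} \<notin> M \<longrightarrow>
             real (card {(e', i). e' \<in> E - ham_edges V \<pi> \<and> i \<in> {1::nat, 2} \<and>
                                  admissible_switch V E \<pi> x e' i})
               \<ge> \<beta> * (real n)^2))"
      proof (rule exI[of _ "min (\<nu>/12) (1/32)"], intro conjI allI impI)
        show "0 < min (\<nu>/12) (1/32::real)" using h\<nu> by simp
        fix \<alpha> :: real assume h\<alpha>: "0 < \<alpha> \<and> \<alpha> \<le> min (\<nu>/12) (1/32)"
        show "\<exists>n0::nat. \<forall>n\<ge>n0. \<forall>(V::'a set) (E::'a set set) A B M \<pi>.
       card V = n \<and>
       superextremal_biclique \<alpha> \<eta> \<nu> V E A B \<and>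
       matching_in E B M \<and> real (card M) \<le> \<alpha> * real n \<and>
       (\<forall>e\<in>E. \<not> e \<subseteq> A) \<and>
       {e \<in> E. e \<subseteq> B} = M \<and>
       (\<forall>a\<in>A. \<forall>b\<in>B. {a, b} \<in> E \<longrightarrow>
          real (max (deg_in E a B) (deg_in E b A)) \<ge> (1/2 - \<eta>) * real n) \<and>
       dir_ham_cycle V E \<pi>
       \<longrightarrow> (\<forall>x\<in>V. {x, \<pi> x} \<notin> M \<longrightarrow>
             real (card {(e', i). e' \<in> E - ham_edges V \<pi> \<and> i \<in> {1::nat, 2} \<and>
                                  admissible_switch V E \<pi> x e' i})
               \<ge> \<beta> * (real n)^2)"
        proof (rule exI[of _ "nat \<lceil>16/\<nu>\<rceil> + 160"], intro allI impI ballI)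
          fix n :: nat and V :: "'a set" and E :: "'a set set" and A B M \<pi> x
          assume hn: "nat \<lceil>16/\<nu>\<rceil> + 160 \<le> n"
          assume hyp: "card V = n \<and>
       superextremal_biclique \<alpha> \<eta> \<nu> V E A B \<and>
       matching_in E B M \<and> real (card M) \<le> \<alpha> * real n \<and>
       (\<forall>e\<in>E. \<not> e \<subseteq> A) \<and>
       {e \<in> E. e \<subseteq> B} = M \<and>
       (\<forall>a\<in>A. \<forall>b\<in>B. {a, b} \<in> E \<longrightarrow>
          real (max (deg_in E a B) (deg_in E b A)) \<ge> (1/2 - \<eta>) * real n) \<and>
       dir_ham_cycle V E \<pi>"
          assume xV: "x \<in> V" and xM: "{x, \<pi> x} \<notin> M"
          have "16/\<nu> \<le> real n" using hn by linarith
          then have n16: "16 \<le> \<nu> * real n" using h\<nu> by (simp add: field_simps)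
          have n160: "160 \<le> n" using hn by simp
          have "\<nu>*n^2/128 \<le> real (card {(e', i). e' \<in> E - ham_edges V \<pi> \<and> i \<in> {1::nat, 2} \<and>
                                  admissible_switch V E \<pi> x e' i})"
          proof (rule main_lemma)
            show "0 < \<eta>" "\<eta> \<le> 1/40" using h\<eta> by simp_all
            show "0 < \<nu>" using h\<nu> by simp
            show "0 < \<alpha>" "\<alpha> \<le> \<nu>/12" "\<alpha> \<le> 1/32" using h\<alpha> by simp_all
            show "16 \<le> \<nu> * real n" by (rule n16)
            show "160 \<le> n" by (rule n160)
            show "card V = n" using hyp by (elim conjE)
            show "superextremal_biclique \<alpha> \<eta> \<nu> V E A B" using hyp by (elim conjE)
            show "matching_in E B M" using hyp by (elim conjE)
            show "real (card M) \<le> \<alpha> * real n" using hyp by (elim conjE)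
            show "\<forall>e\<in>E. \<not> e \<subseteq> A" using hyp by (elim conjE)
            show "{e \<in> E. e \<subseteq> B} = M" using hyp by (elim conjE)
            show "dir_ham_cycle V E \<pi>" using hyp by (elim conjE)
            show "x \<in> V" by (rule xV)
            show "{x, \<pi> x} \<notin> M" by (rule xM)
          qed
          moreover have "\<beta> * (real n)^2 \<le> \<nu>*n^2/128"
          proof -
            have "\<beta> * (real n)^2 \<le> (\<nu>/128) * (real n)^2" using h\<beta> by (intro mult_right_mono) auto
            then show ?thesis by simp
          qed
          ultimately show "\<beta> * (real n)^2 \<le> real (card {(e', i). e' \<in> E - ham_edges V \<pi> \<and> i \<in> {1::nat, 2} \<and>
                                  admissible_switch V E \<pi> x e' i})" by linarith
        qed
      qed
    qed
  qed simp
qed (simp)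


end
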